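(* There is an absolute constant $\alpha>0$ such that the following holds. Let $n\ge 2$, $c\ge 1$, $0<\Delta\le c^2$, and let $W=(\vec v_i)_{i\in I}$ be a family of $|I|\le n$ vectors in $\mathbb{R}^D$ such that every vertex has expected degree at most $c$ in $G\sim\mathcal{G}_W$. Suppose there is $L>0$ with $L\ge \sqrt{\Delta}/(4c)$ such that $\|\vec v_i\|_2<2L$ for all $i\in I$ and at least $(\Delta/60c^2)(n/\lg n)$ indices $i\in I$ satisfy $\|\vec v_i\|_2\ge L$. Then the matrix whose columns are the $\vec v_i$ has rank at least $\alpha\,(\Delta^4/c^9)\, n/\lg^2 n$.
   Context: For a finite family of vectors $W=(\vec w_i)_{i\in I}$ in $\mathbb{R}^D$, $\mathcal{G}_W$ is the distribution on simple undirected graphs with vertex set $I$ in which, independently for each unordered pair $\{i,j\}$ with $i\neq j$, the edge $(i,j)$ is present with probability $\max(0,\min(\vec w_i\cdot\vec w_j,1))$. The expected degree of $i$ is $\sum_{j\ne i}\max(0,\min(\vec w_i\cdot\vec w_j,1))$. $\lg$ is the base-2 logarithm. *)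

theory Defs
  imports "Jordan_Normal_Form.DL_Rank"
begin

definition edge_prob :: "real vec \<Rightarrow> real vec \<Rightarrow> real" where
  "edge_prob v w = max 0 (min (v \<bullet> w) 1)"

text \<open>The family W is a list ws, indexed by I = {0..<length ws}.
  Expected degree of vertex i in G ~ G_W.\<close>
definition expected_degree :: "real vec list \<Rightarrow> nat \<Rightarrow> real" where
  "expected_degree ws i = (\<Sum>j\<in>{0..<length ws} - {i}. edge_prob (ws ! i) (ws ! j))"

definition vnorm :: "real vec \<Rightarrow> real" where
  "vnorm v = sqrt (v \<bullet> v)"

end

theory Submission
  imports Defs "Jordan_Normal_Form.Gram_Schmidt"
begin


context cof_vec_space begin
lemma orth_basis_exists:
  fixes ws :: "'a vec list"
  assumes W: "set ws \<subseteq> carrier_vec n"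
  shows "\<exists>us. set us \<subseteq> carrier_vec n \<and> distinct us \<and> corthogonal us \<and>
     length us = rank (mat_of_cols n ws) \<and> set ws \<subseteq> span (set us)"
proof -
  obtain S where S: "maximal S (\<lambda>T. T \<subseteq> set ws \<and> lin_indpt T)"
    using maximal_exists[of "(\<lambda>T. T \<subseteq> set ws \<and> lin_indpt T)" "card (set ws)" "{}"]
    by (meson List.finite_set card_mono empty_iff empty_subsetI finite_lin_indpt2 rev_finite_subset)
  have Sws: "S \<subseteq> set ws" and Sli: "lin_indpt S" using S by (auto simp: maximal_def)
  have finS: "finite S" using Sws finite_subset by blast
  have A: "mat_of_cols n ws \<in> carrier_mat n (length ws)" by simp
  have rk: "rank (mat_of_cols n ws) = card S"
    using rank_card_indpt[OF A] S cols_mat_of_cols[OF W] by simp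
  have SC: "S \<subseteq> carrier_vec n" using Sws W by auto
  have spanS: "set ws \<subseteq> span S"
  proof
    fix s assume s: "s \<in> set ws"
    show "s \<in> span S"
    proof (rule ccontr)
      assume ns: "s \<notin> span S"
      have sC: "s \<in> carrier_vec n" using s W by auto
      have "s \<notin> S" using ns SC span_mem by auto
      have "lin_indpt (insert s S)"
        using lindep_span ns Sli SC sC lin_dep_iff_in_span by (metis \<open>s \<notin> S\<close> insert_is_Un sup_commute)
      hence "insert s S \<subseteq> set ws \<and> lin_indpt (insert s S)" using s Sws by auto
      thus False using S \<open>s \<notin> S\<close> unfolding maximal_def by blast
    qed
  qed
  obtain xs where xs: "set xs = S" "distinct xs" using finite_distinct_list[OF finS] by blast
  define us where "us = gram_schmidt n xs"
  have gs: "span (set xs) = span (set us)" "corthogonal us" "set us \<subseteq> carrier_vec n"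
     "length us = length xs" "distinct us"
    using gram_schmidt_result[of xs us] xs SC Sli us_def by auto
  show ?thesis
    apply (rule exI[of _ us])
    using gs xs spanS rk distinct_card[OF xs(2)] by auto
qed
end

lemma conj_real_vec[simp]: "conjugate (v::real vec) = v"
  by (auto simp: conjugate_vec_def intro: eq_vecI)

lemma expand_span:
  fixes us :: "real vec list" and v x :: "real vec"
  assumes U: "set us \<subseteq> carrier_vec n" and orth: "corthogonal us"
    and v: "v \<in> LinearCombinations.module.span class_ring (module_vec TYPE(real) n) (set us)" and x: "x \<in> carrier_vec n"
  shows "v \<bullet> x = (\<Sum>u\<in>set us. (v \<bullet> u) * (u \<bullet> x) / (u \<bullet> u))"
proof -
  interpret cof_vec_space n "TYPE(real)" .
  obtain a where a: "lincomb a (set us) = v" using finite_in_span[OF _ U v] by auto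
  have o1: "u \<bullet> u' = 0" if uu: "u \<in> set us" "u' \<in> set us" "u \<noteq> u'" for u u'
  proof -
    obtain i where i: "i < length us" "u = us ! i" using uu(1) by (auto simp: in_set_conv_nth)
    obtain j where j: "j < length us" "u' = us ! j" using uu(2) by (auto simp: in_set_conv_nth)
    have "us ! i \<bullet>c us ! j = 0" using corthogonalD[OF orth i(1) j(1)] i j uu(3) by auto
    thus ?thesis using i j by simp
  qed
  have o2: "u \<bullet> u \<noteq> 0" if uu: "u \<in> set us" for u
  proof -
    obtain i where i: "i < length us" "u = us ! i" using uu by (auto simp: in_set_conv_nth)
    have "us ! i \<bullet>c us ! i \<noteq> 0" using corthogonalD[OF orth i(1) i(1)] by simp
    thus ?thesis using i by simp
  qed
  have lc: "v \<bullet> y = (\<Sum>u\<in>set us. a u * (u \<bullet> y))" if y: "y \<in> carrier_vec n" for y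
  proof -
    have "v \<bullet> y = finsum V (\<lambda>u. a u \<cdot>\<^sub>v u) (set us) \<bullet> y" using a unfolding lincomb_def by simp
    also have "\<dots> = (\<Sum>u\<in>set us. (a u \<cdot>\<^sub>v u) \<bullet> y)"
      by (rule finsum_scalar_prod_sum) (use U y in auto)
    also have "\<dots> = (\<Sum>u\<in>set us. a u * (u \<bullet> y))"
      by (rule sum.cong) (use U y in auto)
    finally show ?thesis .
  qed
  have coef: "a u = (v \<bullet> u) / (u \<bullet> u)" if u: "u \<in> set us" for u
  proof -
    have "v \<bullet> u = (\<Sum>w\<in>set us. a w * (w \<bullet> u))" using lc[of u] u U by auto
    also have "\<dots> = a u * (u \<bullet> u) + (\<Sum>w\<in>set us - {u}. a w * (w \<bullet> u))"
      by (subst sum.remove[OF _ u]) auto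
    also have "(\<Sum>w\<in>set us - {u}. a w * (w \<bullet> u)) = 0"
      by (rule sum.neutral) (use o1 u in auto)
    finally show ?thesis using o2[OF u] by simp
  qed
  show ?thesis using lc[OF x] coef by (auto intro!: sum.cong)
qed


lemma cs_card:
  fixes t :: "'u \<Rightarrow> real"
  assumes "finite U"
  shows "(\<Sum>u\<in>U. t u)\<^sup>2 \<le> real (card U) * (\<Sum>u\<in>U. (t u)\<^sup>2)"
proof -
  have "0 \<le> (\<Sum>u\<in>U. \<Sum>v\<in>U. (t u - t v)\<^sup>2)" by (intro sum_nonneg) auto
  also have "\<dots> = (\<Sum>u\<in>U. \<Sum>v\<in>U. (t u)\<^sup>2 + (t v)\<^sup>2 - 2 * (t u * t v))"
    by (simp add: power2_eq_square algebra_simps)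
  also have "\<dots> = (\<Sum>u\<in>U. real (card U) * (t u)\<^sup>2 + (\<Sum>v\<in>U. (t v)\<^sup>2) - 2 * (t u * (\<Sum>v\<in>U. t v)))"
    by (simp add: sum_subtractf sum.distrib sum_distrib_left)
  also have "\<dots> = 2 * real (card U) * (\<Sum>u\<in>U. (t u)\<^sup>2) - 2 * (\<Sum>u\<in>U. t u)\<^sup>2"
    by (simp add: sum_subtractf sum.distrib sum_distrib_left[symmetric] sum_distrib_right[symmetric] power2_eq_square)
  finally show ?thesis by simp
qed

lemma gram_trace:
  fixes H :: "'i set" and U :: "'u set" and a :: "'i \<Rightarrow> 'u \<Rightarrow> real" and w :: "'u \<Rightarrow> real"
  assumes H: "finite H" and U: "finite U" and w: "\<And>u. u \<in> U \<Longrightarrow> w u \<ge> 0"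
  shows "(\<Sum>i\<in>H. \<Sum>u\<in>U. w u * a i u * a i u)\<^sup>2
     \<le> real (card U) * (\<Sum>i\<in>H. \<Sum>j\<in>H. (\<Sum>u\<in>U. w u * a i u * a j u)\<^sup>2)"
proof -
  define s where "s u = (\<Sum>i\<in>H. a i u * a i u)" for u
  have 1: "(\<Sum>i\<in>H. \<Sum>u\<in>U. w u * a i u * a i u) = (\<Sum>u\<in>U. w u * s u)"
    unfolding s_def by (subst sum.swap) (simp add: sum_distrib_left mult.assoc)
  have 2: "(\<Sum>i\<in>H. \<Sum>j\<in>H. (\<Sum>u\<in>U. w u * a i u * a j u)\<^sup>2)
     = (\<Sum>u\<in>U. \<Sum>v\<in>U. w u * w v * (\<Sum>i\<in>H. a i u * a i v)\<^sup>2)"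
  proof -
    have "(\<Sum>i\<in>H. \<Sum>j\<in>H. (\<Sum>u\<in>U. w u * a i u * a j u)\<^sup>2)
      = (\<Sum>i\<in>H. \<Sum>j\<in>H. \<Sum>u\<in>U. \<Sum>v\<in>U. w u * w v * (a i u * a i v) * (a j u * a j v))"
      by (simp add: power2_eq_square sum_product algebra_simps)
    also have "\<dots> = (\<Sum>i\<in>H. \<Sum>u\<in>U. \<Sum>v\<in>U. \<Sum>j\<in>H. w u * w v * (a i u * a i v) * (a j u * a j v))"
      by (intro sum.cong refl, subst sum.swap, intro sum.cong refl, subst sum.swap) simp
    also have "\<dots> = (\<Sum>u\<in>U. \<Sum>v\<in>U. \<Sum>i\<in>H. \<Sum>j\<in>H. w u * w v * (a i u * a i v) * (a j u * a j v))"
      by (subst sum.swap, intro sum.cong refl, subst sum.swap) simp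
    also have "\<dots> = (\<Sum>u\<in>U. \<Sum>v\<in>U. w u * w v * (\<Sum>i\<in>H. a i u * a i v)\<^sup>2)"
      by (simp add: power2_eq_square sum_product sum_distrib_left algebra_simps)
    finally show ?thesis .
  qed
  have 3: "(\<Sum>u\<in>U. (w u * s u)\<^sup>2) \<le> (\<Sum>u\<in>U. \<Sum>v\<in>U. w u * w v * (\<Sum>i\<in>H. a i u * a i v)\<^sup>2)"
  proof (rule sum_mono)
    fix u assume u: "u \<in> U"
    have "(w u * s u)\<^sup>2 = w u * w u * (\<Sum>i\<in>H. a i u * a i u)\<^sup>2"
      unfolding s_def by (simp add: power2_eq_square)
    also have "\<dots> \<le> (\<Sum>v\<in>U. w u * w v * (\<Sum>i\<in>H. a i u * a i v)\<^sup>2)"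
      by (rule member_le_sum[OF u _ U, where f = "\<lambda>v. w u * w v * (\<Sum>i\<in>H. a i u * a i v)\<^sup>2"])
         (use w u in auto)
    finally show "(w u * s u)\<^sup>2 \<le> (\<Sum>v\<in>U. w u * w v * (\<Sum>i\<in>H. a i u * a i v)\<^sup>2)" .
  qed
  show ?thesis unfolding 1 2
    using cs_card[OF U, of "\<lambda>u. w u * s u"] 3
    by (meson mult_left_mono of_nat_0_le_iff order_trans)
qed

lemma gram_facts:
  fixes H :: "'i set" and U :: "'u set" and a :: "'i \<Rightarrow> 'u \<Rightarrow> real" and w :: "'u \<Rightarrow> real"
  assumes H: "finite H" and U: "finite U" and w: "\<And>u. u \<in> U \<Longrightarrow> w u \<ge> 0"
  defines "x \<equiv> \<lambda>i j. (\<Sum>u\<in>U. w u * a i u * a j u)"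
  shows "(\<Sum>i\<in>H. \<Sum>j\<in>H. x i j) \<ge> 0" and "x i i \<ge> 0" and "2 * \<bar>x i j\<bar> \<le> x i i + x j j"
proof -
  have "(\<Sum>i\<in>H. \<Sum>j\<in>H. x i j) = (\<Sum>u\<in>U. w u * (\<Sum>i\<in>H. a i u)\<^sup>2)"
  proof -
    have "(\<Sum>i\<in>H. \<Sum>j\<in>H. x i j) = (\<Sum>i\<in>H. \<Sum>u\<in>U. \<Sum>j\<in>H. w u * a i u * a j u)"
      unfolding x_def by (intro sum.cong refl, subst sum.swap) simp
    also have "\<dots> = (\<Sum>u\<in>U. \<Sum>i\<in>H. \<Sum>j\<in>H. w u * a i u * a j u)"
      by (subst sum.swap) simp
    also have "\<dots> = (\<Sum>u\<in>U. w u * (\<Sum>i\<in>H. a i u)\<^sup>2)"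
      by (simp add: power2_eq_square sum_product sum_distrib_left algebra_simps)
    finally show ?thesis .
  qed
  also have "\<dots> \<ge> 0" by (intro sum_nonneg) (use w in auto)
  finally show "(\<Sum>i\<in>H. \<Sum>j\<in>H. x i j) \<ge> 0" .
  show "x i i \<ge> 0" unfolding x_def by (intro sum_nonneg) (use w in \<open>auto simp: mult.assoc\<close>)
  have e1: "x i i + x j j - 2 * x i j = (\<Sum>u\<in>U. w u * (a i u - a j u)\<^sup>2)"
    unfolding x_def by (simp add: sum_subtractf sum.distrib sum_distrib_left power2_eq_square algebra_simps)
  have e2: "x i i + x j j + 2 * x i j = (\<Sum>u\<in>U. w u * (a i u + a j u)\<^sup>2)"
    unfolding x_def by (simp add: sum_subtractf sum.distrib sum_distrib_left power2_eq_square algebra_simps)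
  have "(\<Sum>u\<in>U. w u * (a i u - a j u)\<^sup>2) \<ge> 0" "(\<Sum>u\<in>U. w u * (a i u + a j u)\<^sup>2) \<ge> 0"
    by (intro sum_nonneg; use w in auto)+
  thus "2 * \<bar>x i j\<bar> \<le> x i i + x j j" using e1 e2 by linarith
qed

lemma frob_bound:
  fixes x :: "'i \<Rightarrow> 'i \<Rightarrow> real" and H :: "'i set"
  assumes H: "finite H"
    and tot: "(\<Sum>i\<in>H. \<Sum>j\<in>H. x i j) \<ge> 0"
    and diag: "\<And>i. i \<in> H \<Longrightarrow> 0 \<le> x i i \<and> x i i \<le> M"
    and off: "\<And>i j. i \<in> H \<Longrightarrow> j \<in> H \<Longrightarrow> 2 * \<bar>x i j\<bar> \<le> x i i + x j j"
    and deg: "\<And>i. i \<in> H \<Longrightarrow> (\<Sum>j\<in>H-{i}. max 0 (min (x i j) 1)) \<le> c"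
  shows "(\<Sum>i\<in>H. \<Sum>j\<in>H. (x i j)\<^sup>2) \<le> 2 * M * real (card H) * (M + max 1 M * c)"
proof -
  define K where "K = max 1 M"
  define p where "p i j = max 0 (x i j)" for i j
  define q where "q i j = max 0 (- x i j)" for i j
  define P where "P i = (\<Sum>j\<in>H-{i}. p i j)" for i
  define Q where "Q i = (\<Sum>j\<in>H-{i}. q i j)" for i
  have M0: "M \<ge> 0" if "H \<noteq> {}" using diag that by force
  have a: "(\<Sum>j\<in>H. x i j) = x i i + (P i - Q i)" if i: "i \<in> H" for i
  proof -
    have "(\<Sum>j\<in>H. x i j) = x i i + (\<Sum>j\<in>H-{i}. x i j)" by (subst sum.remove[OF H i]) simp
    also have "(\<Sum>j\<in>H-{i}. x i j) = (\<Sum>j\<in>H-{i}. p i j - q i j)"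
      unfolding p_def q_def by (intro sum.cong) auto
    finally show ?thesis unfolding P_def Q_def by (simp add: sum_subtractf)
  qed
  have b: "(\<Sum>j\<in>H. (x i j)\<^sup>2) \<le> M * M + M * (P i + Q i)" if i: "i \<in> H" for i
  proof -
    have "(\<Sum>j\<in>H. (x i j)\<^sup>2) = (x i i)\<^sup>2 + (\<Sum>j\<in>H-{i}. (x i j)\<^sup>2)" by (subst sum.remove[OF H i]) simp
    also have "(x i i)\<^sup>2 \<le> M * M" using diag[OF i] by (simp add: power2_eq_square mult_mono)
    also have "(\<Sum>j\<in>H-{i}. (x i j)\<^sup>2) \<le> (\<Sum>j\<in>H-{i}. M * (p i j + q i j))"
    proof (rule sum_mono)
      fix j assume j: "j \<in> H - {i}"
      have "\<bar>x i j\<bar> \<le> M" using off[OF i, of j] diag[OF i] diag[of j] j by auto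
      moreover have "p i j + q i j = \<bar>x i j\<bar>" unfolding p_def q_def by auto
      ultimately show "(x i j)\<^sup>2 \<le> M * (p i j + q i j)"
        by (metis abs_ge_zero mult_right_mono power2_abs power2_eq_square)
    qed
    also have "\<dots> = M * (P i + Q i)" unfolding P_def Q_def by (simp add: sum_distrib_left[symmetric] sum.distrib)
    finally show ?thesis by simp
  qed
  have c: "P i \<le> K * c" if i: "i \<in> H" for i
  proof -
    have "P i \<le> (\<Sum>j\<in>H-{i}. K * max 0 (min (x i j) 1))"
      unfolding P_def
    proof (rule sum_mono)
      fix j assume j: "j \<in> H - {i}"
      have "x i j \<le> M" using off[OF i, of j] diag[OF i] diag[of j] j by auto
      thus "p i j \<le> K * max 0 (min (x i j) 1)" unfolding p_def K_def
        by (cases "x i j \<le> 1") (auto simp: max_def min_def intro: mult_le_cancel_right1[THEN iffD2] order.trans[OF _ mult_right_mono[of 1 M]])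
    qed
    also have "\<dots> = K * (\<Sum>j\<in>H-{i}. max 0 (min (x i j) 1))" by (simp add: sum_distrib_left)
    also have "\<dots> \<le> K * c" using deg[OF i] by (intro mult_left_mono) (auto simp: K_def)
    finally show ?thesis .
  qed
  have sQ: "(\<Sum>i\<in>H. Q i) \<le> M * real (card H) + (\<Sum>i\<in>H. P i)"
  proof -
    have "0 \<le> (\<Sum>i\<in>H. x i i + (P i - Q i))" using tot a by simp
    also have "\<dots> = (\<Sum>i\<in>H. x i i) + (\<Sum>i\<in>H. P i) - (\<Sum>i\<in>H. Q i)"
      by (simp add: sum.distrib sum_subtractf)
    also have "(\<Sum>i\<in>H. x i i) \<le> (\<Sum>i\<in>H. M)" by (intro sum_mono) (use diag in auto)
    finally show ?thesis by (simp add: mult.commute)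
  qed
  have sP: "(\<Sum>i\<in>H. P i) \<le> real (card H) * (K * c)"
    using sum_mono[of H P "\<lambda>_. K * c"] c by simp
  show ?thesis
  proof (cases "H = {}")
    case True thus ?thesis by simp
  next
    case False
    note M0 = M0[OF False]
    have "(\<Sum>i\<in>H. \<Sum>j\<in>H. (x i j)\<^sup>2) \<le> (\<Sum>i\<in>H. M * M + M * (P i + Q i))"
      by (intro sum_mono b)
    also have "\<dots> = real (card H) * (M * M) + M * ((\<Sum>i\<in>H. P i) + (\<Sum>i\<in>H. Q i))"
      by (simp add: sum.distrib sum_distrib_left[symmetric])
    also have "\<dots> \<le> real (card H) * (M * M) + M * (2 * (real (card H) * (K * c)) + M * real (card H))"
      using sQ sP M0 by (intro add_left_mono mult_left_mono) auto
    also have "\<dots> = 2 * M * real (card H) * (M + K * c)" by (simp add: algebra_simps)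
    finally show ?thesis unfolding K_def .
  qed
qed

lemma final_arith1:
  fixes r m T F L c \<Delta> :: real
  assumes m: "m > 0" and L: "L > 0" and T: "L\<^sup>2 * m \<le> T" and TF: "T\<^sup>2 \<le> r * F"
    and F: "F \<le> 2 * (4 * L\<^sup>2) * m * (4 * L\<^sup>2 + max 1 (4 * L\<^sup>2) * c)"
    and c: "c \<ge> 1" and D: "0 < \<Delta>" "\<Delta> \<le> c\<^sup>2" and LD: "L \<ge> sqrt \<Delta> / (4 * c)" and r: "r \<ge> 0"
  shows "r \<ge> \<Delta> * m / (256 * c ^ 3)"
proof -
  define K where "K = max 1 (4 * L\<^sup>2)"
  have L2: "L\<^sup>2 > 0" using L by simp
  have "(L\<^sup>2 * m)\<^sup>2 \<le> T\<^sup>2" using T L2 m by (intro power_mono) auto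
  also have "\<dots> \<le> r * F" by fact
  also have "\<dots> \<le> r * (2 * (4 * L\<^sup>2) * m * (4 * L\<^sup>2 + K * c))" unfolding K_def using F r by (rule mult_left_mono)
  finally have "(L\<^sup>2 * m) * (L\<^sup>2 * m) \<le> (L\<^sup>2 * m) * (8 * r * (4 * L\<^sup>2 + K * c))"
    by (simp add: power2_eq_square algebra_simps)
  hence key: "L\<^sup>2 * m \<le> 8 * r * (4 * L\<^sup>2 + K * c)" using L2 m by (simp add: mult_le_cancel_left_pos)
  have "sqrt \<Delta> \<le> 4 * c * L" using LD c by (simp add: divide_le_eq mult.commute)
  hence "(sqrt \<Delta>)\<^sup>2 \<le> (4 * c * L)\<^sup>2" using D by (intro power_mono) auto
  hence DL: "\<Delta> \<le> 16 * c\<^sup>2 * L\<^sup>2" using D by (simp add: power_mult_distrib)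
  have c3: "c ^ 3 > 0" using c by simp
  show ?thesis
  proof (cases "4 * L\<^sup>2 \<le> 1")
    case True
    hence "K = 1" unfolding K_def by simp
    hence "L\<^sup>2 * m \<le> 8 * r * (4 * L\<^sup>2 + c)" using key by simp
    also have "\<dots> \<le> 8 * r * (2 * c)" using True c r by (intro mult_left_mono) auto
    finally have A: "L\<^sup>2 * m \<le> 16 * r * c" by simp
    have "\<Delta> * m \<le> 16 * c\<^sup>2 * L\<^sup>2 * m" using DL m by (intro mult_right_mono) auto
    also have "\<dots> = 16 * c\<^sup>2 * (L\<^sup>2 * m)" by simp
    also have "\<dots> \<le> 16 * c\<^sup>2 * (16 * r * c)" using A c by (intro mult_left_mono) auto
    also have "\<dots> = r * (256 * c ^ 3)" by (simp add: power2_eq_square power3_eq_cube)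
    finally show ?thesis using c3 by (simp add: divide_le_eq)
  next
    case False
    hence "K = 4 * L\<^sup>2" unfolding K_def by simp
    hence "L\<^sup>2 * m \<le> 8 * r * (4 * L\<^sup>2 + 4 * L\<^sup>2 * c)" using key by simp
    also have "\<dots> \<le> 8 * r * (8 * L\<^sup>2 * c)" using c r L2 by (intro mult_left_mono) auto
    finally have "L\<^sup>2 * m \<le> L\<^sup>2 * (64 * r * c)" by (simp add: algebra_simps)
    hence A: "m \<le> 64 * r * c" using L2 by (simp add: mult_le_cancel_left_pos)
    have "\<Delta> * m \<le> c\<^sup>2 * m" using D m by (intro mult_right_mono) auto
    also have "\<dots> \<le> c\<^sup>2 * (64 * r * c)" using A by (intro mult_left_mono) auto
    also have "\<dots> \<le> r * (256 * c ^ 3)" using r c by (simp add: power2_eq_square power3_eq_cube)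
    finally show ?thesis using c3 by (simp add: divide_le_eq)
  qed
qed

lemma final_arith2:
  fixes r m c \<Delta> N lg :: real
  assumes r: "r \<ge> \<Delta> * m / (256 * c ^ 3)" and m: "m \<ge> (\<Delta> / (60 * c\<^sup>2)) * (N / lg)"
    and c: "c \<ge> 1" and D: "0 < \<Delta>" "\<Delta> \<le> c\<^sup>2" and lg: "lg \<ge> 1" and N: "N \<ge> 0"
  shows "r \<ge> (1/15360) * (\<Delta> ^ 4 / c ^ 9) * (N / lg\<^sup>2)"
proof -
  have c3: "c ^ 3 > 0" using c by simp
  have "\<Delta> * ((\<Delta> / (60 * c\<^sup>2)) * (N / lg)) / (256 * c ^ 3) \<le> \<Delta> * m / (256 * c ^ 3)"
    using m D c3 by (intro divide_right_mono mult_left_mono) auto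
  also have "\<dots> \<le> r" by fact
  finally have A: "\<Delta>\<^sup>2 * N / (15360 * c ^ 5 * lg) \<le> r"
    by (simp add: power2_eq_square field_simps eval_nat_numeral)
  have "\<Delta>\<^sup>2 \<le> (c\<^sup>2)\<^sup>2" using D by (intro power_mono) auto
  hence D4: "\<Delta>\<^sup>2 \<le> c ^ 4" by (simp flip: power_mult)
  have "(1/15360) * (\<Delta> ^ 4 / c ^ 9) * (N / lg\<^sup>2) = (\<Delta>\<^sup>2 * N / (15360 * c ^ 5 * lg)) * (\<Delta>\<^sup>2 / (c ^ 4 * lg))"
    using c lg by (simp add: field_simps power2_eq_square eval_nat_numeral)
  also have "\<dots> \<le> (\<Delta>\<^sup>2 * N / (15360 * c ^ 5 * lg)) * 1"
  proof (rule mult_left_mono)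
    have "\<Delta>\<^sup>2 \<le> c ^ 4 * lg" using D4 lg c
      by (metis mult_le_cancel_left1 order_trans zero_le_power zero_le_one order_trans[OF zero_le_one c] not_le mult.commute mult_right_mono order_refl)
    thus "\<Delta>\<^sup>2 / (c ^ 4 * lg) \<le> 1" using c lg by (simp add: divide_le_eq)
    show "0 \<le> \<Delta>\<^sup>2 * N / (15360 * c ^ 5 * lg)" using N c lg by simp
  qed
  finally show ?thesis using A by simp
qed


lemma self_dot_nonneg: "(v::real vec) \<bullet> v \<ge> 0"
  unfolding scalar_prod_def by (intro sum_nonneg) auto

theorem mainTheorem9:
  shows "\<exists>\<alpha>::real. \<alpha> > 0 \<and>
    (\<forall>(n::nat) (c::real) (\<Delta>::real) (D::nat) (ws::real vec list) (L::real).
      n \<ge> 2 \<longrightarrow> c \<ge> 1 \<longrightarrow> 0 < \<Delta> \<longrightarrow> \<Delta> \<le> c\<^sup>2 \<longrightarrow>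
      length ws \<le> n \<longrightarrow>
      (\<forall>i<length ws. ws ! i \<in> carrier_vec D) \<longrightarrow>
      (\<forall>i<length ws. expected_degree ws i \<le> c) \<longrightarrow>
      L > 0 \<longrightarrow> L \<ge> sqrt \<Delta> / (4 * c) \<longrightarrow>
      (\<forall>i<length ws. vnorm (ws ! i) < 2 * L) \<longrightarrow>
      real (card {i. i < length ws \<and> vnorm (ws ! i) \<ge> L})
        \<ge> (\<Delta> / (60 * c\<^sup>2)) * (real n / log 2 (real n)) \<longrightarrow>
      real (vec_space.rank D (mat_of_cols D ws))
        \<ge> \<alpha> * (\<Delta> ^ 4 / c ^ 9) * (real n / (log 2 (real n))\<^sup>2))"
proof (rule exI[of _ "1/15360"], intro conjI allI impI)
  show "(0::real) < 1/15360" by simp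
  fix n :: nat and c \<Delta> :: real and D :: nat and ws :: "real vec list" and L :: real
  assume n2: "n \<ge> 2" and c: "c \<ge> 1" and D0: "0 < \<Delta>" and Dc: "\<Delta> \<le> c\<^sup>2"
    and len: "length ws \<le> n" and car: "\<forall>i<length ws. ws ! i \<in> carrier_vec D"
    and deg: "\<forall>i<length ws. expected_degree ws i \<le> c"
    and L0: "L > 0" and LD: "L \<ge> sqrt \<Delta> / (4 * c)"
    and norm2: "\<forall>i<length ws. vnorm (ws ! i) < 2 * L"
    and heavy: "real (card {i. i < length ws \<and> vnorm (ws ! i) \<ge> L})
        \<ge> (\<Delta> / (60 * c\<^sup>2)) * (real n / log 2 (real n))"
  define N where "N = length ws"
  define H where "H = {i. i < length ws \<and> vnorm (ws ! i) \<ge> L}"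
  have W: "set ws \<subseteq> carrier_vec D" using car by (auto simp: in_set_conv_nth)
  interpret cof_vec_space D "TYPE(real)" .
  obtain us where us: "set us \<subseteq> carrier_vec D" "distinct us" "corthogonal us"
     "length us = rank (mat_of_cols D ws)" "set ws \<subseteq> span (set us)"
    using orth_basis_exists[OF W] by blast
  define U where "U = set us"
  define w where "w u = 1 / (u \<bullet> u)" for u :: "real vec"
  define a where "a i u = ws ! i \<bullet> u" for i u
  define x where "x = (\<lambda>i j. (\<Sum>u\<in>U. w u * a i u * a j u))"
  have finU: "finite U" unfolding U_def by simp
  have wpos: "w u \<ge> 0" if "u \<in> U" for u unfolding w_def using self_dot_nonneg[of u] by simp
  have xe: "ws ! i \<bullet> ws ! j = x i j" if i: "i < length ws" and j: "j < length ws" for i j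
  proof -
    have ci: "ws ! i \<in> carrier_vec D" and cj: "ws ! j \<in> carrier_vec D" using car i j by auto
    have sp: "ws ! i \<in> span (set us)" using us(5) i by auto
    have "ws ! i \<bullet> ws ! j = (\<Sum>u\<in>set us. (ws ! i \<bullet> u) * (u \<bullet> ws ! j) / (u \<bullet> u))"
      by (rule expand_span[OF us(1) us(3) sp cj])
    also have "\<dots> = x i j" unfolding x_def U_def w_def a_def
    proof (rule sum.cong[OF refl])
      fix u assume "u \<in> set us"
      hence "u \<in> carrier_vec D" using us(1) by auto
      hence "u \<bullet> ws ! j = ws ! j \<bullet> u" using comm_scalar_prod[OF _ cj] by blast
      thus "(ws ! i \<bullet> u) * (u \<bullet> ws ! j) / (u \<bullet> u) = 1 / (u \<bullet> u) * (ws ! i \<bullet> u) * (ws ! j \<bullet> u)"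
        by simp
    qed
    finally show ?thesis .
  qed
  have finH: "finite H" unfolding H_def by simp
  have Hsub: "H \<subseteq> {0..<length ws}" unfolding H_def by auto
  have GF: "(\<Sum>i\<in>H. \<Sum>j\<in>H. x i j) \<ge> 0" "\<And>i. x i i \<ge> 0" "\<And>i j. 2 * \<bar>x i j\<bar> \<le> x i i + x j j"
    unfolding x_def using gram_facts[OF finH finU, of w a] wpos by auto
  have diag: "L\<^sup>2 \<le> x i i \<and> x i i \<le> 4 * L\<^sup>2" if i: "i \<in> H" for i
  proof -
    have il: "i < length ws" and vl: "vnorm (ws ! i) \<ge> L" using i unfolding H_def by auto
    have xi: "x i i = ws ! i \<bullet> ws ! i" using xe il by simp
    have x0: "x i i \<ge> 0" using GF(2) by simp
    have sq: "vnorm (ws ! i) = sqrt (x i i)" unfolding vnorm_def xi ..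
    have "sqrt (x i i) < 2 * L" using norm2 il sq by auto
    hence "(sqrt (x i i))\<^sup>2 < (2 * L)\<^sup>2" using x0 by (intro power_strict_mono) auto
    hence A: "x i i < 4 * L\<^sup>2" using x0 by (simp add: power_mult_distrib)
    have "L\<^sup>2 \<le> (sqrt (x i i))\<^sup>2" using vl sq L0 by (intro power_mono) auto
    thus ?thesis using A x0 by simp
  qed
  have degH: "(\<Sum>j\<in>H-{i}. max 0 (min (x i j) 1)) \<le> c" if i: "i \<in> H" for i
  proof -
    have il: "i < length ws" using i unfolding H_def by auto
    have "(\<Sum>j\<in>H-{i}. max 0 (min (x i j) 1)) = (\<Sum>j\<in>H-{i}. edge_prob (ws ! i) (ws ! j))"
      unfolding edge_prob_def using xe il Hsub by (intro sum.cong refl) auto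
    also have "\<dots> \<le> (\<Sum>j\<in>{0..<length ws}-{i}. edge_prob (ws ! i) (ws ! j))"
      by (rule sum_mono2) (use Hsub in \<open>auto simp: edge_prob_def\<close>)
    also have "\<dots> = expected_degree ws i" unfolding expected_degree_def ..
    also have "\<dots> \<le> c" using deg il by auto
    finally show ?thesis .
  qed
  define F where "F = (\<Sum>i\<in>H. \<Sum>j\<in>H. (x i j)\<^sup>2)"
  define T where "T = (\<Sum>i\<in>H. x i i)"
  have FB: "F \<le> 2 * (4 * L\<^sup>2) * real (card H) * (4 * L\<^sup>2 + max 1 (4 * L\<^sup>2) * c)"
    unfolding F_def
    by (rule frob_bound[OF finH GF(1)]) (use diag GF(2,3) degH in auto)
  have TF: "T\<^sup>2 \<le> real (card U) * F"
    unfolding T_def F_def x_def using gram_trace[OF finH finU, of w a] wpos by auto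
  have cU: "card U = rank (mat_of_cols D ws)" unfolding U_def using us(2,4) distinct_card by metis
  have TL: "L\<^sup>2 * real (card H) \<le> T"
    unfolding T_def using sum_mono[of H "\<lambda>_. L\<^sup>2" "\<lambda>i. x i i"] diag by (simp add: mult.commute)
  have lg1: "log 2 (real n) \<ge> 1" using n2 by simp
  have m0: "real (card H) > 0"
  proof -
    have "0 < (\<Delta> / (60 * c\<^sup>2)) * (real n / log 2 (real n))" using D0 c n2 lg1 by simp
    thus ?thesis using heavy unfolding H_def by linarith
  qed
  have r1: "real (rank (mat_of_cols D ws)) \<ge> \<Delta> * real (card H) / (256 * c ^ 3)"
    by (rule final_arith1[OF m0 L0 TL _ FB c D0 Dc LD]) (use TF cU in auto)
  show "real (rank (mat_of_cols D ws)) \<ge> 1/15360 * (\<Delta> ^ 4 / c ^ 9) * (real n / (log 2 (real n))\<^sup>2)"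
    by (rule final_arith2[OF r1 _ c D0 Dc lg1]) (use heavy in \<open>auto simp: H_def\<close>)
qed

end
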